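(* Let $T=(T_t)_{t\ge0}$ be a subordinator with Laplace exponent $\phi$, i.e. $\mathbb{E}e^{-\lambda T_t}=e^{-t\phi(\lambda)}$ for $\lambda>0$. Assume that $\phi$ varies regularly at $0$ (at $\infty$, respectively) with index $\gamma\in[0,1)$. Then \[ \mathbb{P}(T_t\ge r)\sim\frac{1}{\Gamma(1-\gamma)}\,t\,\phi(r^{-1}),\qquad r\to\infty\ (r\to0,\text{ resp.})\ \text{ and }\ t\phi(r^{-1})\to0 . \]
   Context: A subordinator is a non-decreasing Lévy process. A function $\ell:(0,\infty)\to(0,\infty)$ varies regularly at $\infty$ (at $0$) with index $\alpha$ if $\ell(\lambda s)/\ell(s)\to\lambda^\alpha$ as $s\to\infty$ ($s\to0$) for every $\lambda>0$. Notation: for functions $f,g,h$ of $(t,r)\in(0,\infty)^2$, "$f(t,r)\sim g(t,r)$, $r\to a$ and $h(t,r)\to 0$" means $\lim f(t,r)/g(t,r)=1$ where the limit is taken jointly as $r\to a$ and $h(t,r)\to0$ (for every $\varepsilon>0$ there is a neighbourhood $U$ of $a$ and $\delta>0$ with $|f/g-1|<\varepsilon$ whenever $r\in U$, $h(t,r)<\delta$). *)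

theory Defs
  imports "HOL-Probability.Probability"
begin

definition subordinator :: "'a measure \<Rightarrow> (real \<Rightarrow> 'a \<Rightarrow> real) \<Rightarrow> bool" where
  "subordinator M T \<longleftrightarrow>
     prob_space M \<and>
     (\<forall>t\<ge>0. T t \<in> borel_measurable M) \<and>
     (\<forall>\<omega>\<in>space M. T 0 \<omega> = 0) \<and>
     (\<forall>\<omega>\<in>space M. mono_on {0..} (\<lambda>t. T t \<omega>)) \<and>
     (\<forall>\<omega>\<in>space M. \<forall>t\<ge>0. continuous (at_right t) (\<lambda>s. T s \<omega>)) \<and>
     (\<forall>(n::nat) (s::nat \<Rightarrow> real). s 0 \<ge> 0 \<longrightarrow> (\<forall>i<n. s i \<le> s (Suc i)) \<longrightarrow>
        prob_space.indep_vars M (\<lambda>_. borel) (\<lambda>i \<omega>. T (s (Suc i)) \<omega> - T (s i) \<omega>) {..<n}) \<and>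
     (\<forall>s\<ge>0. \<forall>t\<ge>0. distr M borel (\<lambda>\<omega>. T (s + t) \<omega> - T s \<omega>) = distr M borel (T t))"

definition laplace_exponent :: "'a measure \<Rightarrow> (real \<Rightarrow> 'a \<Rightarrow> real) \<Rightarrow> (real \<Rightarrow> real) \<Rightarrow> bool" where
  "laplace_exponent M T \<phi> \<longleftrightarrow>
     (\<forall>t\<ge>0. \<forall>l>0. prob_space.expectation M (\<lambda>\<omega>. exp (- l * T t \<omega>)) = exp (- t * \<phi> l))"

definition regvar_at_top :: "(real \<Rightarrow> real) \<Rightarrow> real \<Rightarrow> bool" where
  "regvar_at_top L \<alpha> \<longleftrightarrow> (\<forall>s>0. L s > 0) \<and>
     (\<forall>c>0. ((\<lambda>s. L (c * s) / L s) \<longlongrightarrow> c powr \<alpha>) at_top)"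

definition regvar_at_0 :: "(real \<Rightarrow> real) \<Rightarrow> real \<Rightarrow> bool" where
  "regvar_at_0 L \<alpha> \<longleftrightarrow> (\<forall>s>0. L s > 0) \<and>
     (\<forall>c>0. ((\<lambda>s. L (c * s) / L s) \<longlongrightarrow> c powr \<alpha>) (at_right 0))"

definition joint_equiv_r_top ::
  "(real \<Rightarrow> real \<Rightarrow> real) \<Rightarrow> (real \<Rightarrow> real \<Rightarrow> real) \<Rightarrow> (real \<Rightarrow> real \<Rightarrow> real) \<Rightarrow> bool" where
  "joint_equiv_r_top f g h \<longleftrightarrow> (\<forall>\<epsilon>>0. \<exists>R \<delta>. \<delta> > 0 \<and>
     (\<forall>t r. t > 0 \<longrightarrow> r > 0 \<longrightarrow> r > R \<longrightarrow> h t r < \<delta> \<longrightarrow> \<bar>f t r / g t r - 1\<bar> < \<epsilon>))"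

definition joint_equiv_r_0 ::
  "(real \<Rightarrow> real \<Rightarrow> real) \<Rightarrow> (real \<Rightarrow> real \<Rightarrow> real) \<Rightarrow> (real \<Rightarrow> real \<Rightarrow> real) \<Rightarrow> bool" where
  "joint_equiv_r_0 f g h \<longleftrightarrow> (\<forall>\<epsilon>>0. \<exists>\<rho> \<delta>. \<rho> > 0 \<and> \<delta> > 0 \<and>
     (\<forall>t r. t > 0 \<longrightarrow> r > 0 \<longrightarrow> r < \<rho> \<longrightarrow> h t r < \<delta> \<longrightarrow> \<bar>f t r / g t r - 1\<bar> < \<epsilon>))"

end

theory Submission
  imports Defs "HOL-Analysis.Analysis"
begin


lemma tail_int:
  fixes g u :: real assumes g: "g > 0" and u: "u > 0"
  shows "(\<integral>\<^sup>+x. ennreal (x powr (-g-1)) * indicator {u..} x \<partial>lborel) = ennreal (u powr (-g) / g)"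
proof -
  have "(\<integral>\<^sup>+x. ennreal (x powr (-g-1)) * indicator {u..} x \<partial>lborel) = ennreal (0 - (- (u powr (-g) / g)))"
  proof (rule nn_integral_FTC_atLeast)
    show "(\<lambda>x. x powr (-g-1)) \<in> borel_measurable borel" by measurable
    show "((\<lambda>x. - (x powr (-g) / g)) has_real_derivative x powr (-g-1)) (at x)" if "u \<le> x" for x
    proof -
      have x: "x > 0" using that u by simp
      have "((\<lambda>x. - (x powr (-g) / g)) has_real_derivative - ((-g) * x powr (-g - 1) / g)) (at x)"
        by (intro DERIV_cdivide DERIV_minus has_real_derivative_powr x)
      then show ?thesis using g by simp
    qed
    show "0 \<le> x powr (-g-1)" for x by simp
    have "((\<lambda>x. x powr (-g)) \<longlongrightarrow> 0) at_top"
      using g by (intro tendsto_neg_powr filterlim_ident) auto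
    then have "((\<lambda>x. x powr (-g) / g) \<longlongrightarrow> 0 / g) at_top" using g by (intro tendsto_divide) auto
    then show "((\<lambda>x. - (x powr (-g) / g)) \<longlongrightarrow> 0) at_top"
      using tendsto_minus by fastforce
  qed
  also have "\<dots> = ennreal (u powr (-g) / g)" by simp
  finally show ?thesis .
qed



lemma exp_int:
  fixes s x :: real assumes s: "s > 0" and x: "x \<ge> 0"
  shows "(\<integral>\<^sup>+u. ennreal (s * exp (-s*u)) * indicator {0..x} u \<partial>lborel) = ennreal (1 - exp (-s*x))"
proof -
  have "((\<lambda>u. s * exp (-s*u)) has_integral ((- exp (-s*x)) - (- exp (-s*0)))) {0..x}"
  proof (rule fundamental_theorem_of_calculus)
    show "0 \<le> x" by fact
    show "((\<lambda>u. - exp (-s*u)) has_vector_derivative s * exp (-s*u)) (at u within {0..x})" for u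
      by (auto intro!: derivative_eq_intros simp: has_real_derivative_iff_has_vector_derivative[symmetric])
  qed
  then have "((\<lambda>u. s * exp (-s*u)) has_integral (1 - exp (-s*x))) {0..x}" by simp
  from nn_integral_has_integral_lebesgue'[OF _ this] s show ?thesis by simp
qed

lemma gamma_sub:
  fixes g s :: real assumes g: "0 < g" "g < 1" and s: "s > 0"
  shows "(\<integral>\<^sup>+u. ennreal (indicator {0..} u * (s * exp (-s*u)) * (u powr (-g) / g)) \<partial>lborel)
     = ennreal (s powr g * Gamma (1-g) / g)"
proof -
  define f where "f u = indicator {0..} u * (s * exp (-s*u)) * (u powr (-g) / g)" for u :: real
  have fm[measurable]: "f \<in> borel_measurable borel" unfolding f_def by measurable
  have "(\<integral>\<^sup>+v. ennreal (f (v / s)) \<partial>lborel) = (\<integral>\<^sup>+u. ennreal (f u) \<partial>distr lborel borel ((*) (1/s)))"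
    by (subst nn_integral_distr) (auto simp: f_def field_simps)
  also have "distr lborel borel ((*) (1/s)) = density lborel (\<lambda>_. s)"
    using s by (subst lborel_distr_mult) auto
  also have "(\<integral>\<^sup>+u. ennreal (f u) \<partial>density lborel (\<lambda>_. s)) = (\<integral>\<^sup>+u. ennreal s * ennreal (f u) \<partial>lborel)"
    by (subst nn_integral_density) auto
  also have "\<dots> = ennreal s * (\<integral>\<^sup>+u. ennreal (f u) \<partial>lborel)"
    by (subst nn_integral_cmult) auto
  finally have eq: "(\<integral>\<^sup>+v. ennreal (f (v / s)) \<partial>lborel) = ennreal s * (\<integral>\<^sup>+u. ennreal (f u) \<partial>lborel)" .
  have "(\<integral>\<^sup>+v. ennreal (f (v / s)) \<partial>lborel) =
        (\<integral>\<^sup>+v. ennreal (s powr (1+g) / g) * ennreal (indicator {0..} v * v powr ((1-g) - 1) / exp v) \<partial>lborel)"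
  proof (intro nn_integral_cong)
    fix v :: real
    show "ennreal (f (v / s)) = ennreal (s powr (1+g) / g) * ennreal (indicator {0..} v * v powr ((1-g) - 1) / exp v)"
    proof (cases "v \<ge> 0")
      case True
      have "f (v/s) = s powr (1+g) / g * (v powr ((1-g) - 1) / exp v)"
        using True s g by (simp add: f_def powr_divide powr_minus powr_add exp_minus field_simps)
      then show ?thesis using True s g by (simp add: ennreal_mult'[symmetric])
    next
      case False then show ?thesis using s by (simp add: f_def field_simps)
    qed
  qed
  also have "\<dots> = ennreal (s powr (1+g) / g) * ennreal (Gamma (1-g))"
    using g by (subst nn_integral_cmult) (auto simp: Gamma_conv_nn_integral_real)
  finally have "ennreal s * (\<integral>\<^sup>+u. ennreal (f u) \<partial>lborel) = ennreal s * ennreal (s powr g * Gamma (1-g) / g)"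
    using eq s g by (simp add: ennreal_mult'[symmetric] powr_add field_simps)
  then have "(\<integral>\<^sup>+u. ennreal (f u) \<partial>lborel) = ennreal (s powr g * Gamma (1-g) / g)"
    using s by (simp add: ennreal_mult_cancel_left)
  then show ?thesis by (simp add: f_def)
qed



lemma lev_int:
  fixes g s :: real assumes g: "0 < g" "g < 1" and s: "s > 0"
  shows "(\<integral>\<^sup>+x. ennreal (indicator {0..} x * x powr (-g-1) * (1 - exp (-s*x))) \<partial>lborel)
     = ennreal (s powr g * Gamma (1-g) / g)"
proof -
  define F where "F = (\<lambda>(x::real, u::real). ennreal (indicator {0..} x * x powr (-g-1)) * ennreal (s * exp (-s*u)) * indicator {0..x} u)"
  have Fm[measurable]: "F \<in> borel_measurable (lborel \<Otimes>\<^sub>M lborel)"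
  proof -
    have [measurable]: "Measurable.pred (borel \<Otimes>\<^sub>M borel) (\<lambda>p::real\<times>real. snd p \<in> {0..fst p})"
      by (simp add: atLeastAtMost_iff) measurable
    show ?thesis unfolding F_def
      by (simp add: case_prod_beta')
  qed
  have "(\<integral>\<^sup>+x. ennreal (indicator {0..} x * x powr (-g-1) * (1 - exp (-s*x))) \<partial>lborel)
      = (\<integral>\<^sup>+x. \<integral>\<^sup>+u. F (x,u) \<partial>lborel \<partial>lborel)"
  proof (intro nn_integral_cong)
    fix x :: real
    show "ennreal (indicator {0..} x * x powr (-g-1) * (1 - exp (-s*x))) = (\<integral>\<^sup>+u. F (x,u) \<partial>lborel)"
    proof (cases "x \<ge> 0")
      case True
      have "(\<integral>\<^sup>+u. F (x,u) \<partial>lborel) = ennreal (indicator {0..} x * x powr (-g-1)) *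
              (\<integral>\<^sup>+u. ennreal (s * exp (-s*u)) * indicator {0..x} u \<partial>lborel)"
        unfolding F_def by (subst nn_integral_cmult[symmetric]) (auto simp: mult.assoc)
      also have "\<dots> = ennreal (indicator {0..} x * x powr (-g-1)) * ennreal (1 - exp (-s*x))"
        using exp_int[OF s True] by simp
      also have "\<dots> = ennreal (indicator {0..} x * x powr (-g-1) * (1 - exp (-s*x)))"
        using True s by (subst ennreal_mult'[symmetric]) auto
      finally show ?thesis by simp
    next
      case False then show ?thesis by (simp add: F_def)
    qed
  qed
  also have "\<dots> = (\<integral>\<^sup>+u. \<integral>\<^sup>+x. F (x,u) \<partial>lborel \<partial>lborel)"
    by (subst lborel_pair.Fubini') (auto simp: case_prod_unfold)
  also have "\<dots> = (\<integral>\<^sup>+u. ennreal (indicator {0..} u * (s * exp (-s*u)) * (u powr (-g) / g)) \<partial>lborel)"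
  proof (intro nn_integral_cong_AE eventually_mono[OF AE_lborel_singleton[of 0]] impI)
    fix u :: real assume "u \<noteq> 0"
    show "(\<integral>\<^sup>+x. F (x,u) \<partial>lborel) = ennreal (indicator {0..} u * (s * exp (-s*u)) * (u powr (-g) / g))"
    proof (cases "u > 0")
      case True
      have "(\<integral>\<^sup>+x. F (x,u) \<partial>lborel) = (\<integral>\<^sup>+x. ennreal (s * exp (-s*u)) * (ennreal (x powr (-g-1)) * indicator {u..} x) \<partial>lborel)"
        unfolding F_def using True
        by (intro nn_integral_cong) (auto simp: indicator_def mult_ac)
      also have "\<dots> = ennreal (s * exp (-s*u)) * ennreal (u powr (-g) / g)"
        using tail_int[OF g(1) True] by (subst nn_integral_cmult) auto
      also have "\<dots> = ennreal (indicator {0..} u * (s * exp (-s*u)) * (u powr (-g) / g))"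
        using True s g by (subst ennreal_mult'[symmetric]) auto
      finally show ?thesis .
    next
      case False
      with \<open>u \<noteq> 0\<close> have "u < 0" by simp
      then show ?thesis by (simp add: F_def indicator_def)
    qed
  qed
  also have "\<dots> = ennreal (s powr g * Gamma (1-g) / g)" by (rule gamma_sub[OF g s])
  finally show ?thesis .
qed



definition wt :: "real \<Rightarrow> real \<Rightarrow> real" where
  "wt g x = indicator {0..} x * x powr (-g-1)"

lemma wt_nonneg: "wt g x \<ge> 0" by (simp add: wt_def)
lemma wt_meas[measurable]: "wt g \<in> borel_measurable borel" unfolding wt_def by measurable

lemma lev_integrable:
  fixes g s :: real assumes g: "0 < g" "g < 1" and s: "s \<ge> 0"
  shows "integrable lborel (\<lambda>x. wt g x * (1 - exp (-s*x)))"
    and "integral\<^sup>L lborel (\<lambda>x. wt g x * (1 - exp (-s*x))) = s powr g * (Gamma (1-g) / g)"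
proof -
  have "integrable lborel (\<lambda>x. wt g x * (1 - exp (-s*x))) \<and>
        integral\<^sup>L lborel (\<lambda>x. wt g x * (1 - exp (-s*x))) = s powr g * Gamma (1-g) / g"
  proof (cases "s = 0")
    case True then show ?thesis by simp
  next
    case False
    then have s': "s > 0" using s by simp
    have nn: "0 \<le> wt g x * (1 - exp (- (s*x)))" for x
    proof (cases "x \<ge> 0")
      case True
      then have "exp (- (s*x)) \<le> 1" using s' by simp
      then show ?thesis using wt_nonneg[of g x] by simp
    qed (simp add: wt_def)
    have "0 \<le> s powr g * Gamma (1-g) / g" using g s Gamma_real_pos[of "1-g"] by simp
    moreover have "(\<integral>\<^sup>+x. ennreal (wt g x * (1 - exp (-s*x))) \<partial>lborel) = ennreal (s powr g * Gamma (1-g) / g)"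
      using lev_int[OF g s'] by (simp add: wt_def)
    ultimately show ?thesis
      by (intro iffD1[OF nn_integral_eq_integrable]) (auto intro!: AE_I2 simp: nn)
  qed
  then show "integrable lborel (\<lambda>x. wt g x * (1 - exp (-s*x)))"
    and "integral\<^sup>L lborel (\<lambda>x. wt g x * (1 - exp (-s*x))) = s powr g * (Gamma (1-g) / g)" by auto
qed

lemma tail_integrable:
  fixes g u :: real assumes g: "0 < g" and u: "u > 0"
  shows "integrable lborel (\<lambda>x. wt g x * indicator {u..} x)"
    and "integral\<^sup>L lborel (\<lambda>x. wt g x * indicator {u..} x) = u powr (-g) / g"
proof -
  have "(\<integral>\<^sup>+x. ennreal (wt g x * indicator {u..} x) \<partial>lborel) = ennreal (u powr (-g) / g)"
  proof -
    have "ennreal (wt g x * indicator {u..} x) = ennreal (x powr (-g-1)) * indicator {u..} x" for x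
      using u by (cases "u \<le> x") (simp_all add: wt_def)
    then show ?thesis using tail_int[OF g u] by simp
  qed
  then have "integrable lborel (\<lambda>x. wt g x * indicator {u..} x) \<and>
        integral\<^sup>L lborel (\<lambda>x. wt g x * indicator {u..} x) = u powr (-g) / g"
    using g u by (intro iffD1[OF nn_integral_eq_integrable]) (auto intro!: AE_I2 simp: wt_nonneg)
  then show "integrable lborel (\<lambda>x. wt g x * indicator {u..} x)"
    "integral\<^sup>L lborel (\<lambda>x. wt g x * indicator {u..} x) = u powr (-g) / g" by auto
qed

definition hfun :: "(nat \<Rightarrow> real) \<Rightarrow> nat \<Rightarrow> real \<Rightarrow> real" where
  "hfun c n x = (\<Sum>k\<le>n. c k * ((1 - exp (- (real (Suc k) * x))) - (1 - exp (- (real k * x)))))"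

definition Lam :: "real \<Rightarrow> (nat \<Rightarrow> real) \<Rightarrow> nat \<Rightarrow> real" where
  "Lam g c n = (\<Sum>k\<le>n. c k * (real (Suc k) powr g - real k powr g))"

lemma hfun_integrable:
  fixes g :: real assumes g: "0 < g" "g < 1"
  shows "integrable lborel (\<lambda>x. wt g x * hfun c n x)"
    and "integral\<^sup>L lborel (\<lambda>x. wt g x * hfun c n x) = Gamma (1-g) / g * Lam g c n"
proof -
  have eq: "(\<lambda>x. wt g x * hfun c n x) = (\<lambda>x. \<Sum>k\<le>n. c k * (wt g x * (1 - exp (- (real (Suc k) * x))) - wt g x * (1 - exp (- (real k * x)))))"
    by (auto simp: hfun_def sum_distrib_left algebra_simps)
  have I: "\<And>k::nat. integrable lborel (\<lambda>x. wt g x * (1 - exp (- (real k * x))))"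
    using lev_integrable(1)[OF g, of "real _"] by simp
  show "integrable lborel (\<lambda>x. wt g x * hfun c n x)" unfolding eq
    by (rule Bochner_Integration.integrable_sum, rule integrable_mult_right, rule Bochner_Integration.integrable_diff) (rule I)+
  have Ik: "integral\<^sup>L lborel (\<lambda>x. c k * (wt g x * (1 - exp (- (real (Suc k) * x))) - wt g x * (1 - exp (- (real k * x)))))
     = c k * ((real (Suc k) powr g - real k powr g) * (Gamma (1-g) / g))" for k
  proof -
    have a: "integral\<^sup>L lborel (\<lambda>x. wt g x * (1 - exp (- (real k * x)))) = real k powr g * (Gamma (1-g) / g)"
      using lev_integrable(2)[OF g, of "real k"] by (simp only: mult_minus_left of_nat_0_le_iff)
    have b: "integral\<^sup>L lborel (\<lambda>x. wt g x * (1 - exp (- (real (Suc k) * x)))) = real (Suc k) powr g * (Gamma (1-g) / g)"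
      using lev_integrable(2)[OF g, of "real (Suc k)"] by (simp only: mult_minus_left of_nat_0_le_iff)
    show ?thesis
      by (simp only: integral_mult_right_zero Bochner_Integration.integral_diff[OF I I] a b left_diff_distrib)
  qed
  have "integral\<^sup>L lborel (\<lambda>x. wt g x * hfun c n x) =
     (\<Sum>k\<le>n. c k * ((real (Suc k) powr g - real k powr g) * (Gamma (1-g) / g)))"
    unfolding eq
  proof (subst Bochner_Integration.integral_sum)
    show "integrable lborel (\<lambda>x. c k * (wt g x * (1 - exp (- (real (Suc k) * x))) - wt g x * (1 - exp (- (real k * x)))))" for k
      by (rule integrable_mult_right, rule Bochner_Integration.integrable_diff) (rule I)+
    show "(\<Sum>k\<le>n. integral\<^sup>L lborel (\<lambda>x. c k * (wt g x * (1 - exp (- (real (Suc k) * x))) - wt g x * (1 - exp (- (real k * x)))))) =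
       (\<Sum>k\<le>n. c k * ((real (Suc k) powr g - real k powr g) * (Gamma (1-g) / g)))"
      by (rule sum.cong[OF refl Ik])
  qed
  also have "\<dots> = Gamma (1-g) / g * Lam g c n"
    unfolding Lam_def sum_distrib_left by (intro sum.cong refl) (simp only: mult_ac)
  finally show "integral\<^sup>L lborel (\<lambda>x. wt g x * hfun c n x) = Gamma (1-g) / g * Lam g c n" .
qed



lemma lam_bounds:
  fixes g a b d :: real
  assumes g: "0 < g" "g < 1"
    and low: "\<And>x. x \<ge> 0 \<Longrightarrow> hfun cm nm x \<le> indicator {1..} x"
    and up: "\<And>x. x \<ge> 0 \<Longrightarrow> indicator {1..} x \<le> hfun cp np x"
    and gap: "\<And>x. x \<ge> 0 \<Longrightarrow> hfun cp np x - hfun cm nm x \<le> d * (1 - exp (-x)) + indicator {a..b} x"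
    and ab: "0 < a" "a \<le> b"
  shows "Lam g cm nm \<le> 1 / Gamma (1-g)" "1 / Gamma (1-g) \<le> Lam g cp np"
    "Lam g cp np - Lam g cm nm \<le> d + g / Gamma (1-g) * ((b - a) * a powr (-g-1))"
proof -
  have G: "Gamma (1-g) > 0" using g by (intro Gamma_real_pos) simp
  let ?G = "Gamma (1-g) / g"
  have G': "?G > 0" using G g by simp
  have wt0: "x < 0 \<Longrightarrow> wt g x = 0" for x by (simp add: wt_def)
  note Im = hfun_integrable[OF g, of cm nm] and Ip = hfun_integrable[OF g, of cp np]
  note T1 = tail_integrable[OF g(1), of 1, simplified]
  have "integral\<^sup>L lborel (\<lambda>x. wt g x * hfun cm nm x) \<le> integral\<^sup>L lborel (\<lambda>x. wt g x * indicator {1..} x)"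
  proof (rule integral_mono[OF Im(1) T1(1)])
    fix x :: real show "wt g x * hfun cm nm x \<le> wt g x * indicator {1..} x"
    proof (cases "x \<ge> 0")
      case True then show ?thesis using low[OF True] wt_nonneg[of g x] by (intro mult_left_mono) auto
    qed (simp add: wt0)
  qed
  then have "?G * Lam g cm nm \<le> 1 / g" using Im(2) T1(2) by simp
  then have "g * (?G * Lam g cm nm) \<le> g * (1 / g)" using g by (intro mult_left_mono) auto
  then have "Gamma (1-g) * Lam g cm nm \<le> 1" using g by simp
  then show L1: "Lam g cm nm \<le> 1 / Gamma (1-g)" using G by (simp add: pos_le_divide_eq mult.commute)
  have "integral\<^sup>L lborel (\<lambda>x. wt g x * indicator {1..} x) \<le> integral\<^sup>L lborel (\<lambda>x. wt g x * hfun cp np x)"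
  proof (rule integral_mono[OF T1(1) Ip(1)])
    fix x :: real show "wt g x * indicator {1..} x \<le> wt g x * hfun cp np x"
    proof (cases "x \<ge> 0")
      case True then show ?thesis using up[OF True] wt_nonneg[of g x] by (intro mult_left_mono) auto
    qed (simp add: wt0)
  qed
  then have "1 / g \<le> ?G * Lam g cp np" using Ip(2) T1(2) by simp
  then have "g * (1 / g) \<le> g * (?G * Lam g cp np)" using g by (intro mult_left_mono) auto
  then have "1 \<le> Gamma (1-g) * Lam g cp np" using g by simp
  then show "1 / Gamma (1-g) \<le> Lam g cp np" using G by (simp add: pos_divide_le_eq mult.commute)
  note E1 = lev_integrable[OF g, of 1, simplified]
  have Iab: "integrable lborel (\<lambda>x. wt g x * indicator {a..b} x)"
  proof (rule Bochner_Integration.integrable_bound[OF tail_integrable(1)[OF g(1) ab(1)]])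
    show "(\<lambda>x. wt g x * indicator {a..b} x) \<in> borel_measurable lborel" by measurable
    show "AE x in lborel. norm (wt g x * indicator {a..b} x) \<le> norm (wt g x * indicator {a..} x)"
      by (intro AE_I2) (auto simp: indicator_def abs_mult wt_nonneg)
  qed
  have Cab: "integrable lborel (\<lambda>x. a powr (-g-1) * indicator {a..b} x)"
  proof -
    have "integrable lborel (\<lambda>x. indicat_real {a..b} x *\<^sub>R a powr (-g-1))"
      using ab by (intro integrable_indicator) (auto simp: emeasure_lborel_Icc)
    then show ?thesis by (simp add: mult.commute)
  qed
  have "integral\<^sup>L lborel (\<lambda>x. wt g x * indicator {a..b} x) \<le> integral\<^sup>L lborel (\<lambda>x. a powr (-g-1) * indicator {a..b} x)"
  proof (rule integral_mono[OF Iab Cab])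
    fix x :: real show "wt g x * indicator {a..b} x \<le> a powr (-g-1) * indicator {a..b} x"
    proof (cases "a \<le> x \<and> x \<le> b")
      case True
      then have "x powr (-g-1) \<le> a powr (-g-1)" using ab g by (intro powr_mono2') auto
      then show ?thesis using True ab by (simp add: wt_def indicator_def)
    qed (auto simp: indicator_def)
  qed
  also have "\<dots> = a powr (-g-1) * (b - a)" using ab by simp
  finally have Aab: "integral\<^sup>L lborel (\<lambda>x. wt g x * indicator {a..b} x) \<le> (b - a) * a powr (-g-1)" by (metis mult.commute)
  have R: "integrable lborel (\<lambda>x. d * (wt g x * (1 - exp (- x))) + wt g x * indicator {a..b} x)"
    using E1(1) Iab by (intro Bochner_Integration.integrable_add integrable_mult_right) auto
  have "integral\<^sup>L lborel (\<lambda>x. wt g x * hfun cp np x - wt g x * hfun cm nm x)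
      \<le> integral\<^sup>L lborel (\<lambda>x. d * (wt g x * (1 - exp (- x))) + wt g x * indicator {a..b} x)"
  proof (rule integral_mono[OF Bochner_Integration.integrable_diff[OF Ip(1) Im(1)] R])
    fix x :: real show "wt g x * hfun cp np x - wt g x * hfun cm nm x \<le> d * (wt g x * (1 - exp (- x))) + wt g x * indicator {a..b} x"
    proof (cases "x \<ge> 0")
      case True
      have "wt g x * (hfun cp np x - hfun cm nm x) \<le> wt g x * (d * (1 - exp (-x)) + indicator {a..b} x)"
        using gap[OF True] wt_nonneg[of g x] by (intro mult_left_mono) auto
      then show ?thesis by (simp add: algebra_simps)
    qed (simp add: wt0)
  qed
  also have "\<dots> = d * ?G + integral\<^sup>L lborel (\<lambda>x. wt g x * indicator {a..b} x)"
    using E1 Iab by (subst Bochner_Integration.integral_add) auto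
  finally have "?G * (Lam g cp np - Lam g cm nm) \<le> d * ?G + (b - a) * a powr (-g-1)"
    using Aab Im(2) Ip(2) by (simp add: Bochner_Integration.integral_diff[OF Ip(1) Im(1)] right_diff_distrib)
  then have "g * (?G * (Lam g cp np - Lam g cm nm)) \<le> g * (d * ?G + (b - a) * a powr (-g-1))"
    using g by (intro mult_left_mono) auto
  then have "Gamma (1-g) * (Lam g cp np - Lam g cm nm) \<le> Gamma (1-g) * d + g * ((b - a) * a powr (-g-1))"
    using g by (simp add: distrib_left mult.commute)
  then have "Lam g cp np - Lam g cm nm \<le> (Gamma (1-g) * d + g * ((b - a) * a powr (-g-1))) / Gamma (1-g)"
    using G by (simp add: pos_le_divide_eq mult.commute)
  also have "\<dots> = d + g / Gamma (1-g) * ((b - a) * a powr (-g-1))"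
    using G by (simp add: add_divide_distrib)
  finally show "Lam g cp np - Lam g cm nm \<le> d + g / Gamma (1-g) * ((b - a) * a powr (-g-1))" .
qed



lemma hfun_poly: "hfun c n x = (1 - exp (-x)) * (\<Sum>k\<le>n. c k * exp (-x) ^ k)"
proof -
  have e: "exp (- (real m * x)) = exp (-x) ^ m" for m
    by (metis exp_of_nat_mult mult_minus_right)
  have "c k * ((1 - exp (- (real (Suc k) * x))) - (1 - exp (- (real k * x)))) = (1 - exp (-x)) * (c k * exp (-x) ^ k)" for k
    by (simp only: e power_Suc) (simp add: algebra_simps)
  then show ?thesis unfolding hfun_def sum_distrib_left
    by (intro sum.cong refl)
qed

lemma Lam0: "Lam 0 c n = c 0"
proof -
  have "Lam 0 c n = (\<Sum>k\<le>n. (if k = 0 then c k else 0))"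
    unfolding Lam_def by (intro sum.cong refl) auto
  also have "\<dots> = c 0" by (simp add: sum.delta)
  finally show ?thesis .
qed

definition clamp :: "real \<Rightarrow> real" where "clamp z = max 0 (min 1 z)"

lemma clamp_cont: "continuous_on S f \<Longrightarrow> continuous_on S (\<lambda>x. clamp (f x))"
  unfolding clamp_def by (intro continuous_intros)

lemma clamp_bounds: "0 \<le> clamp z" "clamp z \<le> 1" by (auto simp: clamp_def)
lemma clamp_1: "z \<ge> 1 \<Longrightarrow> clamp z = 1" by (auto simp: clamp_def)
lemma clamp_0: "z \<le> 0 \<Longrightarrow> clamp z = 0" by (auto simp: clamp_def)

lemma poly_approx:
  fixes G :: "real \<Rightarrow> real" assumes "continuous_on {0..1} G" "d > 0"
  obtains c n where "\<And>y. y \<in> {0..1} \<Longrightarrow> \<bar>G y - (\<Sum>i\<le>n. c i * y ^ i)\<bar> < d"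
proof -
  obtain p where p: "real_polynomial_function p" "\<And>y. y \<in> {0..1} \<Longrightarrow> \<bar>G y - p y\<bar> < d"
    using Stone_Weierstrass_real_polynomial_function[of "{0..1::real}" G d] assms by auto
  obtain c n where "p = (\<lambda>x. \<Sum>i\<le>n. c i * x ^ i)" using real_polynomial_function_imp_sum[OF p(1)] by auto
  then show ?thesis using p(2) that by auto
qed

lemma shift_poly: "(\<Sum>i\<le>n. (c i + (if i = 0 then e else 0)) * y ^ i) = (\<Sum>i\<le>n. c i * y ^ i) + (e::real)"
proof -
  have "(\<Sum>i\<le>n. (c i + (if i = 0 then e else 0)) * y ^ i) = (\<Sum>i\<le>n. c i * y ^ i) + (\<Sum>i\<le>n. (if i = 0 then e else 0) * y ^ i)"
    by (simp only: distrib_right sum.distrib)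
  also have "(\<Sum>i\<le>n. (if i = 0 then e else 0) * y ^ i) = (\<Sum>i\<le>n. (if i = 0 then e else 0))"
    by (intro sum.cong refl) auto
  also have "\<dots> = e" by (simp add: sum.delta)
  finally show ?thesis .
qed



lemma construct:
  fixes eta dl :: real assumes eta: "0 < eta" "eta \<le> 1/2" and dl: "dl > 0"
  obtains cm nm cp np where
    "\<And>x. x \<ge> 0 \<Longrightarrow> hfun cm nm x \<le> indicator {1..} x"
    "\<And>x. x \<ge> 0 \<Longrightarrow> indicator {1..} x \<le> hfun cp np x"
    "\<And>x. x \<ge> 0 \<Longrightarrow> hfun cp np x - hfun cm nm x \<le> (4*dl) * (1 - exp (-x)) + indicator {1-eta..1+eta} x"
    "cm 0 \<ge> 1 - 2*dl" "cp 0 \<le> 1 + 2*dl"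
proof -
  define a where "a = exp (-1::real)"
  define b where "b = exp (-(1-eta))"
  define a' where "a' = exp (-(1+eta))"
  have a'a: "a' < a" unfolding a_def a'_def using eta by simp
  have ab: "a < b" unfolding a_def b_def using eta by simp
  have b1: "b < 1" unfolding b_def using eta by simp
  have a'0: "a' > 0" unfolding a'_def by simp
  define D where "D y = 1 - min y b" for y
  have D: "D y \<ge> 1 - b" for y unfolding D_def by simp
  have Dpos: "D y > 0" for y using D[of y] b1 by linarith
  define Gp where "Gp y = clamp ((b - y) / (b - a)) / D y" for y
  define Gm where "Gm y = clamp ((a - y) / (a - a')) / D y" for y
  have cGp: "continuous_on {0..1} Gp" unfolding Gp_def D_def
    using Dpos ab a'a unfolding D_def
    by (intro continuous_intros clamp_cont) (auto simp: less_le)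
  have cGm: "continuous_on {0..1} Gm" unfolding Gm_def D_def
    using Dpos ab a'a unfolding D_def
    by (intro continuous_intros clamp_cont) (auto simp: less_le)
  obtain cP nP where P: "\<And>y. y \<in> {0..1} \<Longrightarrow> \<bar>Gp y - (\<Sum>i\<le>nP. cP i * y ^ i)\<bar> < dl"
    using poly_approx[OF cGp dl] by blast
  obtain cM nM where M: "\<And>y. y \<in> {0..1} \<Longrightarrow> \<bar>Gm y - (\<Sum>i\<le>nM. cM i * y ^ i)\<bar> < dl"
    using poly_approx[OF cGm dl] by blast
  define cp where "cp i = cP i + (if i = 0 then dl else 0)" for i
  define cm where "cm i = cM i + (if i = 0 then -dl else 0)" for i
  have hp: "hfun cp nP x = (1 - exp (-x)) * ((\<Sum>i\<le>nP. cP i * exp (-x) ^ i) + dl)" for x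
    unfolding hfun_poly cp_def shift_poly ..
  have hm: "hfun cm nM x = (1 - exp (-x)) * ((\<Sum>i\<le>nM. cM i * exp (-x) ^ i) + - dl)" for x
    unfolding hfun_poly cm_def shift_poly ..
  have key: "(1 - exp (-x)) * Gm (exp (-x)) \<le> indicator {1..} x \<and>
             indicator {1..} x \<le> (1 - exp (-x)) * Gp (exp (-x)) \<and>
             (1 - exp (-x)) * (Gp (exp (-x)) - Gm (exp (-x))) \<le> indicator {1-eta..1+eta} x" if x: "x \<ge> 0" for x
  proof -
    define y where "y = exp (-x)"
    have y0: "y > 0" unfolding y_def by simp
    have y1: "y \<le> 1" unfolding y_def using x by simp
    have iff1: "x \<ge> 1 \<longleftrightarrow> y \<le> a" unfolding y_def a_def by simp
    have iff2: "x < 1 - eta \<longleftrightarrow> y > b" unfolding y_def b_def by auto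
    have iff3: "x > 1 + eta \<longleftrightarrow> y < a'" unfolding y_def a'_def by auto
    define r where "r = (1 - y) / D y"
    have r0: "r \<ge> 0" unfolding r_def using Dpos[of y] y1 by simp
    have r1: "r \<le> 1" unfolding r_def using Dpos[of y] by (simp add: D_def)
    have eqp: "(1 - y) * Gp y = clamp ((b - y) / (b - a)) * r" unfolding Gp_def r_def by simp
    have eqm: "(1 - y) * Gm y = clamp ((a - y) / (a - a')) * r" unfolding Gm_def r_def by simp
    have eqd: "(1 - y) * (Gp y - Gm y) = (clamp ((b - y) / (b - a)) - clamp ((a - y) / (a - a'))) * r"
      unfolding Gp_def Gm_def r_def by (simp add: algebra_simps diff_divide_distrib)
    have P1: "(1 - y) * Gm y \<le> indicator {1..} x"
    proof (cases "x \<ge> 1")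
      case True
      then have "y \<le> a" using iff1 by simp
      then have "r = 1" unfolding r_def D_def using ab b1 by simp
      then show ?thesis using eqm True clamp_bounds by simp
    next
      case False
      then have "a < y" using iff1 by simp
      then have "(a - y) / (a - a') \<le> 0" using a'a by (intro divide_nonpos_pos) auto
      then have "clamp ((a - y) / (a - a')) = 0" by (rule clamp_0)
      then have "(1 - y) * Gm y = 0" using eqm by simp
      moreover have "indicator {1..} x = (0::real)" using False by simp
      ultimately show ?thesis by linarith
    qed
    have P2: "indicator {1..} x \<le> (1 - y) * Gp y"
    proof (cases "x \<ge> 1")
      case True
      then have ya: "y \<le> a" using iff1 by simp
      then have "r = 1" unfolding r_def D_def using ab b1 by simp
      moreover have "(b - y) / (b - a) \<ge> 1" using ya ab by simp
      ultimately have "clamp ((b - y) / (b - a)) = 1" "r = 1" by (simp_all add: clamp_1)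
      then show ?thesis using eqp True by simp
    next
      case False
      then show ?thesis using eqp r0 clamp_bounds by simp
    qed
    have P3: "(1 - y) * (Gp y - Gm y) \<le> indicator {1-eta..1+eta} x"
    proof (cases "x < 1 - eta")
      case True
      then have yb: "y > b" using iff2 by simp
      have "(b - y) / (b - a) \<le> 0" using yb ab by (intro divide_nonpos_pos) auto
      moreover have "(a - y) / (a - a') \<le> 0" using yb ab a'a by (intro divide_nonpos_pos) auto
      ultimately have "clamp ((b - y) / (b - a)) = 0" "clamp ((a - y) / (a - a')) = 0" by (simp_all add: clamp_0)
      then have "(1 - y) * (Gp y - Gm y) = 0" using eqd by simp
      moreover have "0 \<le> (indicator {1-eta..1+eta} x::real)" by simp
      ultimately show ?thesis by linarith
    next
      case False
      show ?thesis
      proof (cases "x > 1 + eta")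
        case True
        then have ya: "y < a'" using iff3 by simp
        have "(b - y) / (b - a) \<ge> 1" using ya ab a'a by simp
        moreover have "(a - y) / (a - a') \<ge> 1" using ya a'a by simp
        ultimately have "clamp ((b - y) / (b - a)) = 1" "clamp ((a - y) / (a - a')) = 1" by (simp_all add: clamp_1)
        then have "(1 - y) * (Gp y - Gm y) = 0" using eqd by simp
      moreover have "0 \<le> (indicator {1-eta..1+eta} x::real)" by simp
      ultimately show ?thesis by linarith
      next
        case False2: False
        then have ind: "indicator {1-eta..1+eta} x = (1::real)" using False by simp
        define u where "u = clamp ((b - y) / (b - a)) - clamp ((a - y) / (a - a'))"
        have u1: "u \<le> 1" unfolding u_def using clamp_bounds by smt
        have "u * r \<le> 1"
        proof (cases "u \<le> 0")
          case True then show ?thesis using r0 by (metis mult_nonpos_nonneg order_trans zero_le_one)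
        next
          case False then have "u * r \<le> u" using r1 by (simp add: mult_left_le)
          then show ?thesis using u1 by simp
        qed
        then show ?thesis using eqd ind unfolding u_def by simp
      qed
    qed
    show ?thesis using P1 P2 P3 unfolding y_def by blast
  qed
  show ?thesis
  proof (rule that[of cm nM cp nP])
    fix x :: real assume x: "x \<ge> 0"
    define y where "y = exp (-x)"
    have y0: "y \<ge> 0" "y \<le> 1" unfolding y_def using x by auto
    have yy: "y \<in> {0..1}" using y0 by auto
    have om: "0 \<le> 1 - y" using y0 by simp
    note K = key[OF x, folded y_def]
    note Py = P[OF yy] and My = M[OF yy]
    have "hfun cm nM x \<le> (1 - y) * Gm y"
      unfolding hm y_def[symmetric] using My om by (intro mult_left_mono) auto
    then show "hfun cm nM x \<le> indicator {1..} x" using K by linarith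
    have "(1 - y) * Gp y \<le> hfun cp nP x"
      unfolding hp y_def[symmetric] using Py om by (intro mult_left_mono) auto
    then show "indicator {1..} x \<le> hfun cp nP x" using K by linarith
    have "hfun cp nP x - hfun cm nM x = (1 - y) * ((\<Sum>i\<le>nP. cP i * y ^ i) - (\<Sum>i\<le>nM. cM i * y ^ i) + 2 * dl)"
      unfolding hp hm y_def[symmetric] by (simp add: algebra_simps)
    also have "\<dots> \<le> (1 - y) * (Gp y - Gm y + 4 * dl)"
      using Py My om by (intro mult_left_mono) auto
    also have "\<dots> = (1 - y) * (Gp y - Gm y) + (4 * dl) * (1 - y)" by (simp add: algebra_simps)
    also have "\<dots> \<le> indicator {1-eta..1+eta} x + (4 * dl) * (1 - y)" using K by linarith
    finally show "hfun cp nP x - hfun cm nM x \<le> (4*dl) * (1 - exp (-x)) + indicator {1-eta..1+eta} x"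
      unfolding y_def by simp
  next
    have G0: "Gm 0 = 1" "Gp 0 = 1"
      unfolding Gm_def Gp_def D_def using a'a ab a'0 b1 by (auto simp: clamp_1)
    have z: "(\<Sum>i\<le>n. c i * (0::real) ^ i) = c 0" for c n
      by (simp add: power_0_left sum.delta if_distrib cong: if_cong)
    show "cm 0 \<ge> 1 - 2*dl" using M[of 0] G0 unfolding cm_def z by simp
    show "cp 0 \<le> 1 + 2*dl" using P[of 0] G0 unfolding cp_def z by simp
  qed
qed



lemma approx:
  fixes g e :: real assumes g: "0 \<le> g" "g < 1" and e: "e > 0"
  shows "\<exists>cm nm cp np. (\<forall>x\<ge>0. hfun cm nm x \<le> indicator {1..} x) \<and> (\<forall>x\<ge>0. indicator {1..} x \<le> hfun cp np x)
     \<and> 1 / Gamma (1-g) - e \<le> Lam g cm nm \<and> Lam g cp np \<le> 1 / Gamma (1-g) + e"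
proof (cases "g = 0")
  case True
  obtain cm nm cp np where c:
    "\<And>x. x \<ge> 0 \<Longrightarrow> hfun cm nm x \<le> indicator {1..} x"
    "\<And>x. x \<ge> 0 \<Longrightarrow> indicator {1..} x \<le> hfun cp np x"
    "cm 0 \<ge> 1 - 2*(e/4)" "cp 0 \<le> 1 + 2*(e/4)"
  proof -
    have "(1::real)/2 > 0" "(1::real)/2 \<le> 1/2" "e/4 > 0" using e by auto
    from construct[OF this] show ?thesis by (metis that)
  qed
  show ?thesis using c e True by (intro exI[of _ cm] exI[of _ nm] exI[of _ cp] exI[of _ np]) (auto simp: Lam0)
next
  case False
  then have g0: "0 < g" using g by simp
  have G: "Gamma (1-g) > 0" using g by (intro Gamma_real_pos) simp
  define K where "K = g / Gamma (1-g) * 2 * (1/2) powr (-g-1)"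
  have K0: "K \<ge> 0" unfolding K_def using G g0 by simp
  define eta where "eta = min (1/2) (e / (2 * (K + 1)))"
  have "e / (2 * (K + 1)) > 0" using e K0 by simp
  then have eta: "0 < eta" "eta \<le> 1/2" unfolding eta_def by (simp, simp only: min.cobounded1)
  obtain cm nm cp np where c:
    "\<And>x. x \<ge> 0 \<Longrightarrow> hfun cm nm x \<le> indicator {1..} x"
    "\<And>x. x \<ge> 0 \<Longrightarrow> indicator {1..} x \<le> hfun cp np x"
    "\<And>x. x \<ge> 0 \<Longrightarrow> hfun cp np x - hfun cm nm x \<le> (4*(e/8)) * (1 - exp (-x)) + indicator {1-eta..1+eta} x"
  proof -
    have "e/8 > 0" using e by simp
    from construct[OF eta this] show ?thesis by (metis that)
  qed
  have ab: "0 < 1 - eta" "1 - eta \<le> 1 + eta" using eta by auto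
  note LB = lam_bounds[OF g0 g(2) c(1) c(2) c(3) ab]
  have "(1 - eta) powr (-g-1) \<le> (1/2) powr (-g-1)" using eta g0 by (intro powr_mono2') auto
  then have "g / Gamma (1-g) * (((1 + eta) - (1 - eta)) * (1 - eta) powr (-g-1)) \<le> g / Gamma (1-g) * (2 * eta * (1/2) powr (-g-1))"
    using G g0 eta by (intro mult_left_mono) auto
  also have "\<dots> = K * eta" unfolding K_def by simp
  also have "\<dots> \<le> K * (e / (2 * (K + 1)))" using K0 unfolding eta_def by (intro mult_left_mono) auto
  also have "\<dots> \<le> e / 2"
  proof -
    have "K * (e / (2 * (K + 1))) = (e/2) * (K / (K + 1))" by (simp add: field_simps)
    also have "\<dots> \<le> (e/2) * 1" using K0 e by (intro mult_left_mono) auto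
    finally show ?thesis by simp
  qed
  finally have gap: "Lam g cp np - Lam g cm nm \<le> e" using LB(3) by simp
  show ?thesis using LB(1) LB(2) gap c(1) c(2)
    by (intro exI[of _ cm] exI[of _ nm] exI[of _ cp] exI[of _ np]) auto
qed



definition Afun :: "(real \<Rightarrow> real) \<Rightarrow> real \<Rightarrow> real \<Rightarrow> nat \<Rightarrow> real" where
  "Afun phi t r k = (if k = 0 then 0 else 1 - exp (- (t * phi (real k * (1 / r)))))"

definition Sfun :: "(real \<Rightarrow> real) \<Rightarrow> (nat \<Rightarrow> real) \<Rightarrow> nat \<Rightarrow> real \<Rightarrow> real \<Rightarrow> real" where
  "Sfun phi c n t r = (\<Sum>k\<le>n. c k * (Afun phi t r (Suc k) - Afun phi t r k))"

lemma prob_hfun: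
  assumes sub: "subordinator M T" and lap: "laplace_exponent M T phi" and t: "t > 0" and r: "r > 0"
  shows "integral\<^sup>L M (\<lambda>\<omega>. hfun c n (T t \<omega> / r)) = Sfun phi c n t r"
    and "integrable M (\<lambda>\<omega>. hfun c n (T t \<omega> / r))"
    and "\<And>\<omega>. \<omega> \<in> space M \<Longrightarrow> T t \<omega> / r \<ge> 0"
proof -
  interpret prob_space M using sub unfolding subordinator_def by simp
  have Tm[measurable]: "T t \<in> borel_measurable M" using sub t unfolding subordinator_def by simp
  have Tnn: "T t \<omega> \<ge> 0" if "\<omega> \<in> space M" for \<omega>
  proof -
    have "mono_on {0..} (\<lambda>t. T t \<omega>)" "T 0 \<omega> = 0" using sub that unfolding subordinator_def by auto
    then show ?thesis using t by (metis atLeast_iff less_imp_le mono_onD order_refl)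
  qed
  then show "\<And>\<omega>. \<omega> \<in> space M \<Longrightarrow> T t \<omega> / r \<ge> 0" using r by simp
  have Ik: "integrable M (\<lambda>\<omega>. 1 - exp (- (real k * (T t \<omega> / r))))" for k
  proof (rule integrable_const_bound[where B=1])
    show "AE \<omega> in M. norm (1 - exp (- (real k * (T t \<omega> / r)))) \<le> 1"
    proof (rule AE_I2)
      fix \<omega> assume "\<omega> \<in> space M"
      then have "real k * (T t \<omega> / r) \<ge> 0" using Tnn r by simp
      then have "exp (- (real k * (T t \<omega> / r))) \<le> 1" "exp (- (real k * (T t \<omega> / r))) > 0" by simp_all
      then show "norm (1 - exp (- (real k * (T t \<omega> / r)))) \<le> 1" by simp
    qed
    show "(\<lambda>\<omega>. 1 - exp (- (real k * (T t \<omega> / r)))) \<in> borel_measurable M" by measurable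
  qed
  have Ek: "integral\<^sup>L M (\<lambda>\<omega>. 1 - exp (- (real k * (T t \<omega> / r)))) = Afun phi t r k" for k
  proof (cases "k = 0")
    case True then show ?thesis by (simp add: Afun_def prob_space)
  next
    case False
    define l where "l = real k * (1 / r)"
    have l: "l > 0" using False r unfolding l_def by simp
    have "expectation (\<lambda>\<omega>. exp (- l * T t \<omega>)) = exp (- t * phi l)"
      using lap t l unfolding laplace_exponent_def by auto
    moreover have "(\<lambda>\<omega>. exp (- (real k * (T t \<omega> / r)))) = (\<lambda>\<omega>. exp (- l * T t \<omega>))"
      unfolding l_def by (simp add: field_simps)
    moreover have ie: "integrable M (\<lambda>\<omega>. exp (- (real k * (T t \<omega> / r))))"
    proof (rule integrable_const_bound[where B=1])
      show "AE \<omega> in M. norm (exp (- (real k * (T t \<omega> / r)))) \<le> 1"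
      proof (rule AE_I2)
        fix \<omega> assume "\<omega> \<in> space M"
        then have "real k * (T t \<omega> / r) \<ge> 0" using Tnn r by simp
        then show "norm (exp (- (real k * (T t \<omega> / r)))) \<le> 1" by simp
      qed
      show "(\<lambda>\<omega>. exp (- (real k * (T t \<omega> / r)))) \<in> borel_measurable M" by measurable
    qed
    have "integral\<^sup>L M (\<lambda>\<omega>. 1 - exp (- (real k * (T t \<omega> / r)))) = 1 - integral\<^sup>L M (\<lambda>\<omega>. exp (- (real k * (T t \<omega> / r))))"
      using ie by (subst Bochner_Integration.integral_diff) (auto simp: prob_space)
    ultimately show ?thesis using False unfolding Afun_def l_def by simp
  qed
  show "integrable M (\<lambda>\<omega>. hfun c n (T t \<omega> / r))" unfolding hfun_def
    by (rule Bochner_Integration.integrable_sum, rule integrable_mult_right, rule Bochner_Integration.integrable_diff) (rule Ik)+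
  show "integral\<^sup>L M (\<lambda>\<omega>. hfun c n (T t \<omega> / r)) = Sfun phi c n t r" unfolding hfun_def Sfun_def
  proof (subst Bochner_Integration.integral_sum)
    show "integrable M (\<lambda>\<omega>. c k * ((1 - exp (- (real (Suc k) * (T t \<omega> / r)))) - (1 - exp (- (real k * (T t \<omega> / r))))))" for k
      by (rule integrable_mult_right, rule Bochner_Integration.integrable_diff) (rule Ik)+
    show "(\<Sum>k\<le>n. integral\<^sup>L M (\<lambda>\<omega>. c k * ((1 - exp (- (real (Suc k) * (T t \<omega> / r)))) - (1 - exp (- (real k * (T t \<omega> / r))))))) =
      (\<Sum>k\<le>n. c k * (Afun phi t r (Suc k) - Afun phi t r k))"
    proof (rule sum.cong[OF refl])
      fix k
      show "integral\<^sup>L M (\<lambda>\<omega>. c k * ((1 - exp (- (real (Suc k) * (T t \<omega> / r)))) - (1 - exp (- (real k * (T t \<omega> / r)))))) =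
        c k * (Afun phi t r (Suc k) - Afun phi t r k)"
        by (simp only: integral_mult_right_zero Bochner_Integration.integral_diff[OF Ik Ik] Ek)
    qed
  qed
qed



lemma prob_bounds:
  assumes sub: "subordinator M T" and lap: "laplace_exponent M T phi" and t: "t > 0" and r: "r > 0"
    and low: "\<forall>x\<ge>0. hfun cm nm x \<le> indicator {1..} x"
    and up: "\<forall>x\<ge>0. indicator {1..} x \<le> hfun cp np x"
  shows "Sfun phi cm nm t r \<le> measure M {\<omega> \<in> space M. T t \<omega> \<ge> r}"
    and "measure M {\<omega> \<in> space M. T t \<omega> \<ge> r} \<le> Sfun phi cp np t r"
proof -
  interpret prob_space M using sub unfolding subordinator_def by simp
  have Tm[measurable]: "T t \<in> borel_measurable M" using sub t unfolding subordinator_def by simp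
  note hm = prob_hfun(1,2)[OF sub lap t r, of cm nm] prob_hfun(3)[OF sub lap t r]
    and hp = prob_hfun(1,2)[OF sub lap t r, of cp np] prob_hfun(3)[OF sub lap t r]
  have II: "integrable M (\<lambda>\<omega>. indicator {1..} (T t \<omega> / r) :: real)"
  proof (rule integrable_const_bound[where B=1])
    show "AE \<omega> in M. norm (indicator {1..} (T t \<omega> / r) :: real) \<le> 1" by (intro AE_I2) (simp add: indicator_def)
    show "(\<lambda>\<omega>. indicator {1..} (T t \<omega> / r) :: real) \<in> borel_measurable M" by measurable
  qed
  have sets: "{\<omega> \<in> space M. T t \<omega> \<ge> r} \<in> sets M" by measurable
  have "integral\<^sup>L M (\<lambda>\<omega>. indicator {1..} (T t \<omega> / r) :: real) = integral\<^sup>L M (indicator {\<omega> \<in> space M. T t \<omega> \<ge> r})"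
    using r by (intro Bochner_Integration.integral_cong refl) (simp add: indicator_def field_simps)
  also have "\<dots> = measure M {\<omega> \<in> space M. T t \<omega> \<ge> r}"
    by (simp add: Int_absorb2 sets.sets_into_space[OF sets])
  finally have P: "integral\<^sup>L M (\<lambda>\<omega>. indicator {1..} (T t \<omega> / r) :: real) = measure M {\<omega> \<in> space M. T t \<omega> \<ge> r}" .
  have "integral\<^sup>L M (\<lambda>\<omega>. hfun cm nm (T t \<omega> / r)) \<le> integral\<^sup>L M (\<lambda>\<omega>. indicator {1..} (T t \<omega> / r) :: real)"
    using hm(3) low by (intro integral_mono[OF hm(2) II]) auto
  then show "Sfun phi cm nm t r \<le> measure M {\<omega> \<in> space M. T t \<omega> \<ge> r}" using hm(1) P by simp
  have "integral\<^sup>L M (\<lambda>\<omega>. indicator {1..} (T t \<omega> / r) :: real) \<le> integral\<^sup>L M (\<lambda>\<omega>. hfun cp np (T t \<omega> / r))"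
    using hp(3) up by (intro integral_mono[OF II hp(2)]) auto
  then show "measure M {\<omega> \<in> space M. T t \<omega> \<ge> r} \<le> Sfun phi cp np t r" using hp(1) P by simp
qed

lemma lim_exp: "((\<lambda>u::real. (1 - exp (-u)) / u) \<longlongrightarrow> 1) (at 0)"
proof -
  have "((\<lambda>u::real. 1 - exp (-u)) has_real_derivative 1) (at 0)"
    by (auto intro!: derivative_eq_intros)
  then show ?thesis unfolding DERIV_def by simp
qed

lemma asym_A:
  fixes F :: "(real \<times> real) filter"
  assumes ratio: "\<And>c. c > 0 \<Longrightarrow> ((\<lambda>p. phi (c * (1 / snd p)) / phi (1 / snd p)) \<longlongrightarrow> c powr g) F"
    and D0: "((\<lambda>p. fst p * phi (1 / snd p)) \<longlongrightarrow> 0) F"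
    and pos: "eventually (\<lambda>p. fst p > 0 \<and> snd p > 0) F"
    and phipos: "\<And>s. s > 0 \<Longrightarrow> phi s > 0"
  shows "((\<lambda>p. Afun phi (fst p) (snd p) k / (fst p * phi (1 / snd p))) \<longlongrightarrow> real k powr g) F"
proof (cases "k = 0")
  case True then show ?thesis by (simp add: Afun_def)
next
  case False
  then have kp: "real k > 0" by simp
  define D where "D p = fst p * phi (1 / snd p)" for p :: "real \<times> real"
  define R where "R p = phi (real k * (1 / snd p)) / phi (1 / snd p)" for p :: "real \<times> real"
  define u where "u p = fst p * phi (real k * (1 / snd p))" for p :: "real \<times> real"
  have R: "(R \<longlongrightarrow> real k powr g) F" unfolding R_def using ratio[OF kp] .
  have ev: "eventually (\<lambda>p. u p = D p * R p \<and> u p > 0 \<and> D p > 0) F"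
    using pos
  proof eventually_elim
    case (elim p)
    then have "phi (1 / snd p) > 0" "phi (real k * (1 / snd p)) > 0" using phipos kp by auto
    then show ?case using elim unfolding u_def D_def R_def by (simp add: field_simps)
  qed
  have "((\<lambda>p. D p * R p) \<longlongrightarrow> 0 * real k powr g) F"
    using D0 R unfolding D_def by (intro tendsto_mult)
  moreover have "eventually (\<lambda>p. D p * R p = u p) F" using ev by (rule eventually_mono) simp
  ultimately have u0: "(u \<longlongrightarrow> 0) F" by (auto intro: Lim_transform_eventually)
  have "eventually (\<lambda>p. u p \<in> UNIV \<and> u p \<noteq> 0) F" using ev by (rule eventually_mono) (metis UNIV_I less_irrefl)
  then have "filterlim u (at 0) F" using u0 by (simp add: filterlim_at)
  then have "((\<lambda>p. (1 - exp (- u p)) / u p) \<longlongrightarrow> 1) F"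
    using lim_exp by (rule filterlim_compose[rotated])
  then have "((\<lambda>p. (1 - exp (- u p)) / u p * R p) \<longlongrightarrow> 1 * real k powr g) F"
    using R by (intro tendsto_mult)
  moreover have "eventually (\<lambda>p. (1 - exp (- u p)) / u p * R p = Afun phi (fst p) (snd p) k / (fst p * phi (1 / snd p))) F"
    using ev
  proof eventually_elim
    case (elim p)
    then have Rn: "R p \<noteq> 0" and Dn: "D p \<noteq> 0" by auto
    have A: "Afun phi (fst p) (snd p) k = 1 - exp (- u p)" using False unfolding Afun_def u_def by simp
    have "(1 - exp (- u p)) / u p * R p = (1 - exp (- u p)) / D p"
      using elim Rn Dn by (simp add: divide_simps)
    then show ?case unfolding A D_def by simp
  qed
  ultimately show ?thesis by (auto intro: Lim_transform_eventually)
qed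

lemma asym_S:
  fixes F :: "(real \<times> real) filter"
  assumes ratio: "\<And>c. c > 0 \<Longrightarrow> ((\<lambda>p. phi (c * (1 / snd p)) / phi (1 / snd p)) \<longlongrightarrow> c powr g) F"
    and D0: "((\<lambda>p. fst p * phi (1 / snd p)) \<longlongrightarrow> 0) F"
    and pos: "eventually (\<lambda>p. fst p > 0 \<and> snd p > 0) F"
    and phipos: "\<And>s. s > 0 \<Longrightarrow> phi s > 0"
  shows "((\<lambda>p. Sfun phi c n (fst p) (snd p) / (fst p * phi (1 / snd p))) \<longlongrightarrow> Lam g c n) F"
proof -
  note A = asym_A[OF ratio D0 pos phipos]
  have "((\<lambda>p. \<Sum>k\<le>n. c k * (Afun phi (fst p) (snd p) (Suc k) / (fst p * phi (1 / snd p)) - Afun phi (fst p) (snd p) k / (fst p * phi (1 / snd p))))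
     \<longlongrightarrow> (\<Sum>k\<le>n. c k * (real (Suc k) powr g - real k powr g))) F"
    by (intro tendsto_sum tendsto_mult tendsto_const tendsto_diff A)
  moreover have "(\<lambda>p. \<Sum>k\<le>n. c k * (Afun phi (fst p) (snd p) (Suc k) / (fst p * phi (1 / snd p)) - Afun phi (fst p) (snd p) k / (fst p * phi (1 / snd p))))
     = (\<lambda>p. Sfun phi c n (fst p) (snd p) / (fst p * phi (1 / snd p)))"
    unfolding Sfun_def sum_divide_distrib by (intro ext sum.cong refl) (simp add: diff_divide_distrib[symmetric])
  ultimately show ?thesis unfolding Lam_def by simp
qed



lemma main_generic:
  fixes F :: "(real \<times> real) filter"
  assumes sub: "subordinator M T" and lap: "laplace_exponent M T phi"
    and g: "0 \<le> g" "g < 1"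
    and ratio: "\<And>c. c > 0 \<Longrightarrow> ((\<lambda>p. phi (c * (1 / snd p)) / phi (1 / snd p)) \<longlongrightarrow> c powr g) F"
    and D0: "((\<lambda>p. fst p * phi (1 / snd p)) \<longlongrightarrow> 0) F"
    and pos: "eventually (\<lambda>p. fst p > 0 \<and> snd p > 0) F"
    and phipos: "\<And>s. s > 0 \<Longrightarrow> phi s > 0"
    and ep: "ep > 0"
  shows "eventually (\<lambda>p. \<bar>measure M {\<omega> \<in> space M. T (fst p) \<omega> \<ge> snd p} / (fst p * phi (1 / snd p) / Gamma (1 - g)) - 1\<bar> < ep) F"
proof -
  define G where "G = Gamma (1 - g)"
  have G: "G > 0" unfolding G_def using g by (intro Gamma_real_pos) simp
  define e where "e = ep / (4 * G)"
  have e: "e > 0" unfolding e_def using ep G by simp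
  obtain cm nm cp np where c: "\<forall>x\<ge>0. hfun cm nm x \<le> indicator {1..} x" "\<forall>x\<ge>0. indicator {1..} x \<le> hfun cp np x"
     "1 / G - e \<le> Lam g cm nm" "Lam g cp np \<le> 1 / G + e"
    using approx[OF g e] unfolding G_def by blast
  note Sm = asym_S[OF ratio D0 pos phipos, of cm nm] and Sp = asym_S[OF ratio D0 pos phipos, of cp np]
  have ev1: "eventually (\<lambda>p. Lam g cm nm - e < Sfun phi cm nm (fst p) (snd p) / (fst p * phi (1 / snd p))) F"
    using Sm e by (intro order_tendstoD) auto
  have ev2: "eventually (\<lambda>p. Sfun phi cp np (fst p) (snd p) / (fst p * phi (1 / snd p)) < Lam g cp np + e) F"
    using Sp e by (intro order_tendstoD) auto
  show ?thesis using ev1 ev2 pos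
  proof eventually_elim
    case (elim p)
    define t where "t = fst p"
    define r where "r = snd p"
    have t: "t > 0" and r: "r > 0" using elim unfolding t_def r_def by auto
    define D where "D = t * phi (1 / r)"
    have D: "D > 0" unfolding D_def using t r phipos by simp
    define P where "P = measure M {\<omega> \<in> space M. T t \<omega> \<ge> r}"
    note PB = prob_bounds[OF sub lap t r c(1) c(2)]
    have lo: "1 / G - 2 * e < P / D"
    proof -
      have "1 / G - 2 * e < Sfun phi cm nm t r / D" using elim(1) c(3) unfolding t_def r_def D_def by simp
      also have "\<dots> \<le> P / D" using PB(1) D unfolding P_def by (simp add: divide_right_mono)
      finally show ?thesis .
    qed
    have hi: "P / D < 1 / G + 2 * e"
    proof -
      have "P / D \<le> Sfun phi cp np t r / D" using PB(2) D unfolding P_def by (simp add: divide_right_mono)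
      also have "\<dots> < 1 / G + 2 * e" using elim(2) c(4) unfolding t_def r_def D_def by simp
      finally show ?thesis .
    qed
    have eq: "P / (D / G) = G * (P / D)" by simp
    have "G * (1 / G - 2 * e) < G * (P / D)" using lo G by (intro mult_strict_left_mono) auto
    moreover have "G * (P / D) < G * (1 / G + 2 * e)" using hi G by (intro mult_strict_left_mono) auto
    moreover have "G * (1 / G - 2 * e) = 1 - ep / 2" "G * (1 / G + 2 * e) = 1 + ep / 2"
      unfolding e_def using G by (simp_all add: field_simps)
    ultimately have "\<bar>P / (D / G) - 1\<bar> < ep" unfolding eq using ep by linarith
    then show ?case unfolding P_def D_def G_def t_def r_def .
  qed
qed



lemma unpack:
  fixes A :: "real filter" and h :: "real \<times> real \<Rightarrow> real"
  assumes ev: "eventually Q (inf (inf (filtercomap snd A) (filtercomap h (nhds 0))) (principal {p. fst p > 0 \<and> snd p > 0}))"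
  shows "\<exists>P1 d. eventually P1 A \<and> d > 0 \<and> (\<forall>t r. t > 0 \<longrightarrow> r > 0 \<longrightarrow> P1 r \<longrightarrow> \<bar>h (t, r)\<bar> < d \<longrightarrow> Q (t, r))"
proof -
  from ev have "eventually (\<lambda>p. p \<in> {p. fst p > 0 \<and> snd p > 0} \<longrightarrow> Q p) (inf (filtercomap snd A) (filtercomap h (nhds 0)))"
    by (simp add: eventually_inf_principal)
  then obtain Q1 Q2 where q: "eventually Q1 (filtercomap snd A)" "eventually Q2 (filtercomap h (nhds 0))"
    "\<forall>p. Q1 p \<and> Q2 p \<longrightarrow> (p \<in> {p. fst p > 0 \<and> snd p > 0} \<longrightarrow> Q p)"
    unfolding eventually_inf by blast
  obtain P1 where p1: "eventually P1 A" "\<forall>p. P1 (snd p) \<longrightarrow> Q1 p" using q(1) unfolding eventually_filtercomap by blast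
  obtain P2 where p2: "eventually P2 (nhds 0)" "\<forall>p. P2 (h p) \<longrightarrow> Q2 p" using q(2) unfolding eventually_filtercomap by blast
  obtain d where d: "d > 0" "\<forall>x. dist x 0 < d \<longrightarrow> P2 x" using p2(1) unfolding eventually_nhds_metric by blast
  show ?thesis
  proof (intro exI[of _ P1] exI[of _ d] conjI allI impI)
    show "eventually P1 A" "d > 0" by fact+
    fix t r :: real assume "t > 0" "r > 0" "P1 r" "\<bar>h (t, r)\<bar> < d"
    then show "Q (t, r)" using p1(2)[rule_format, of "(t,r)"] p2(2)[rule_format, of "(t,r)"] d(2) q(3) by auto
  qed
qed

lemma filt_facts:
  fixes A :: "real filter" and h :: "real \<times> real \<Rightarrow> real"
  defines "F \<equiv> inf (inf (filtercomap snd A) (filtercomap h (nhds 0))) (principal {p. fst p > 0 \<and> snd p > 0})"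
  shows "eventually (\<lambda>p. fst p > 0 \<and> snd p > 0) F" "(h \<longlongrightarrow> 0) F" "filterlim snd A F"
proof -
  show "eventually (\<lambda>p. fst p > 0 \<and> snd p > 0) F" unfolding F_def eventually_inf_principal by simp
  have le1: "F \<le> filtercomap h (nhds 0)" unfolding F_def by (meson inf_le1 inf_le2 order_trans)
  have le2: "F \<le> filtercomap snd A" unfolding F_def by (meson inf_le1 order_trans)
  show "(h \<longlongrightarrow> 0) F" using filterlim_mono[OF filterlim_filtercomap order_refl le1] .
  show "filterlim snd A F" using filterlim_mono[OF filterlim_filtercomap order_refl le2] .
qed

theorem corollary1p2:
  fixes M :: "'a measure" and T :: "real \<Rightarrow> 'a \<Rightarrow> real"
    and \<phi> :: "real \<Rightarrow> real" and \<gamma> :: real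
  assumes "subordinator M T"
    and "laplace_exponent M T \<phi>"
    and "0 \<le> \<gamma>" and "\<gamma> < 1"
  shows "(regvar_at_0 \<phi> \<gamma> \<longrightarrow>
           joint_equiv_r_top (\<lambda>t r. measure M {\<omega> \<in> space M. T t \<omega> \<ge> r})
             (\<lambda>t r. t * \<phi> (1 / r) / Gamma (1 - \<gamma>)) (\<lambda>t r. t * \<phi> (1 / r)))
       \<and> (regvar_at_top \<phi> \<gamma> \<longrightarrow>
           joint_equiv_r_0 (\<lambda>t r. measure M {\<omega> \<in> space M. T t \<omega> \<ge> r})
             (\<lambda>t r. t * \<phi> (1 / r) / Gamma (1 - \<gamma>)) (\<lambda>t r. t * \<phi> (1 / r)))"
proof (intro conjI impI)
  define h where "h = (\<lambda>p::real\<times>real. fst p * \<phi> (1 / snd p))"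
  define S where "S = {p::real\<times>real. fst p > 0 \<and> snd p > 0}"
  let ?Q = "\<lambda>ep p. \<bar>measure M {\<omega> \<in> space M. T (fst p) \<omega> \<ge> snd p} / (fst p * \<phi> (1 / snd p) / Gamma (1 - \<gamma>)) - 1\<bar> < ep"
  {
    assume rv: "regvar_at_0 \<phi> \<gamma>"
    define F where "F = inf (inf (filtercomap snd at_top) (filtercomap h (nhds 0))) (principal S)"
    have ff: "eventually (\<lambda>p. fst p > 0 \<and> snd p > 0) F" "(h \<longlongrightarrow> 0) F" "filterlim snd at_top F"
      unfolding F_def S_def by (rule filt_facts)+
    have phipos: "\<And>s. s > 0 \<Longrightarrow> \<phi> s > 0" using rv unfolding regvar_at_0_def by auto
    have inv: "filterlim (\<lambda>p. 1 / snd p) (at_right 0) F"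
      using filterlim_compose[OF filterlim_inverse_at_right_top ff(3)] by (simp add: inverse_eq_divide)
    have ratio: "((\<lambda>p. \<phi> (c * (1 / snd p)) / \<phi> (1 / snd p)) \<longlongrightarrow> c powr \<gamma>) F" if "c > 0" for c
    proof -
      have "((\<lambda>s. \<phi> (c * s) / \<phi> s) \<longlongrightarrow> c powr \<gamma>) (at_right 0)"
        using rv that unfolding regvar_at_0_def by auto
      from filterlim_compose[OF this inv] show ?thesis .
    qed
    have ev: "eventually (?Q ep) F" if "ep > 0" for ep
      using main_generic[OF assms ratio ff(2)[unfolded h_def] ff(1) phipos that] by blast
    show "joint_equiv_r_top (\<lambda>t r. measure M {\<omega> \<in> space M. T t \<omega> \<ge> r})
             (\<lambda>t r. t * \<phi> (1 / r) / Gamma (1 - \<gamma>)) (\<lambda>t r. t * \<phi> (1 / r))"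
      unfolding joint_equiv_r_top_def
    proof (intro allI impI)
      fix ep :: real assume ep: "ep > 0"
      obtain P1 d where pd: "eventually P1 at_top" "d > 0"
        "\<forall>t r. t > 0 \<longrightarrow> r > 0 \<longrightarrow> P1 r \<longrightarrow> \<bar>h (t, r)\<bar> < d \<longrightarrow> ?Q ep (t, r)"
        using unpack[OF ev[OF ep, unfolded F_def S_def]] by blast
      obtain N where N: "\<forall>n\<ge>N. P1 n" using pd(1) unfolding eventually_at_top_linorder by blast
      show "\<exists>R \<delta>. \<delta> > 0 \<and> (\<forall>t r. t > 0 \<longrightarrow> r > 0 \<longrightarrow> r > R \<longrightarrow> t * \<phi> (1 / r) < \<delta> \<longrightarrow>
          \<bar>measure M {\<omega> \<in> space M. T t \<omega> \<ge> r} / (t * \<phi> (1 / r) / Gamma (1 - \<gamma>)) - 1\<bar> < ep)"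
      proof -
      have "\<forall>t r. t > 0 \<longrightarrow> r > 0 \<longrightarrow> r > N \<longrightarrow> t * \<phi> (1 / r) < d \<longrightarrow>
          \<bar>measure M {\<omega> \<in> space M. T t \<omega> \<ge> r} / (t * \<phi> (1 / r) / Gamma (1 - \<gamma>)) - 1\<bar> < ep"
      proof (intro allI impI)
        fix t r :: real assume a: "t > 0" "r > 0" "r > N" "t * \<phi> (1 / r) < d"
        have "t * \<phi> (1 / r) > 0" using a phipos by simp
        then have "\<bar>h (t, r)\<bar> < d" using a unfolding h_def by simp
        then show "\<bar>measure M {\<omega> \<in> space M. T t \<omega> \<ge> r} / (t * \<phi> (1 / r) / Gamma (1 - \<gamma>)) - 1\<bar> < ep"
          using pd(3) a N by auto
      qed
      then show ?thesis using pd(2) by blast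
      qed
    qed
  }
  {
    assume rv: "regvar_at_top \<phi> \<gamma>"
    define F where "F = inf (inf (filtercomap snd (at_right 0)) (filtercomap h (nhds 0))) (principal S)"
    have ff: "eventually (\<lambda>p. fst p > 0 \<and> snd p > 0) F" "(h \<longlongrightarrow> 0) F" "filterlim snd (at_right 0) F"
      unfolding F_def S_def by (rule filt_facts)+
    have phipos: "\<And>s. s > 0 \<Longrightarrow> \<phi> s > 0" using rv unfolding regvar_at_top_def by auto
    have inv: "filterlim (\<lambda>p. 1 / snd p) at_top F"
      using filterlim_compose[OF filterlim_inverse_at_top_right ff(3)] by (simp add: inverse_eq_divide)
    have ratio: "((\<lambda>p. \<phi> (c * (1 / snd p)) / \<phi> (1 / snd p)) \<longlongrightarrow> c powr \<gamma>) F" if "c > 0" for c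
    proof -
      have "((\<lambda>s. \<phi> (c * s) / \<phi> s) \<longlongrightarrow> c powr \<gamma>) at_top"
        using rv that unfolding regvar_at_top_def by auto
      from filterlim_compose[OF this inv] show ?thesis .
    qed
    have ev: "eventually (?Q ep) F" if "ep > 0" for ep
      using main_generic[OF assms ratio ff(2)[unfolded h_def] ff(1) phipos that] by blast
    show "joint_equiv_r_0 (\<lambda>t r. measure M {\<omega> \<in> space M. T t \<omega> \<ge> r})
             (\<lambda>t r. t * \<phi> (1 / r) / Gamma (1 - \<gamma>)) (\<lambda>t r. t * \<phi> (1 / r))"
      unfolding joint_equiv_r_0_def
    proof (intro allI impI)
      fix ep :: real assume ep: "ep > 0"
      obtain P1 d where pd: "eventually P1 (at_right 0)" "d > 0"
        "\<forall>t r. t > 0 \<longrightarrow> r > 0 \<longrightarrow> P1 r \<longrightarrow> \<bar>h (t, r)\<bar> < d \<longrightarrow> ?Q ep (t, r)"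
        using unpack[OF ev[OF ep, unfolded F_def S_def]] by blast
      obtain b where b: "b > 0" "\<forall>y>0. y < b \<longrightarrow> P1 y"
      proof -
        have "eventually P1 (at_right (0::real)) \<longleftrightarrow> (\<exists>b>0. \<forall>y>0. y < b \<longrightarrow> P1 y)"
          by (rule eventually_at_right[of 0 1]) simp
        with pd(1) show ?thesis using that by blast
      qed
      show "\<exists>\<rho> \<delta>. \<rho> > 0 \<and> \<delta> > 0 \<and> (\<forall>t r. t > 0 \<longrightarrow> r > 0 \<longrightarrow> r < \<rho> \<longrightarrow> t * \<phi> (1 / r) < \<delta> \<longrightarrow>
          \<bar>measure M {\<omega> \<in> space M. T t \<omega> \<ge> r} / (t * \<phi> (1 / r) / Gamma (1 - \<gamma>)) - 1\<bar> < ep)"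
      proof -
      have "\<forall>t r. t > 0 \<longrightarrow> r > 0 \<longrightarrow> r < b \<longrightarrow> t * \<phi> (1 / r) < d \<longrightarrow>
          \<bar>measure M {\<omega> \<in> space M. T t \<omega> \<ge> r} / (t * \<phi> (1 / r) / Gamma (1 - \<gamma>)) - 1\<bar> < ep"
      proof (intro allI impI)
        fix t r :: real assume a: "t > 0" "r > 0" "r < b" "t * \<phi> (1 / r) < d"
        have "t * \<phi> (1 / r) > 0" using a phipos by simp
        then have "\<bar>h (t, r)\<bar> < d" using a unfolding h_def by simp
        then show "\<bar>measure M {\<omega> \<in> space M. T t \<omega> \<ge> r} / (t * \<phi> (1 / r) / Gamma (1 - \<gamma>)) - 1\<bar> < ep"
          using pd(3) a b by auto
      qed
      then show ?thesis using pd(2) b(1) by blast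
      qed
    qed
  }
qed


end
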